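(* Suppose $D_{KL}(\hat{\mathsf p}_k\,\|\,\hat\pi_k)\le\epsilon_k<\infty$ for each $k$. Then the linearized game with payoff $\tilde L(\lambda,g)=\sum_{k=1}^p\lambda_kD_{KL}(\hat{\mathsf p}_k\,\|\,\pi_g)$ on $\Delta\times\mathcal G_1$ admits a saddle point $(\lambda^*,g^* )$, i.e. $\tilde L(\lambda,g^* )\le\tilde L(\lambda^*,g^* )\le\tilde L(\lambda^*,g)$ for all $\lambda\in\Delta$, $g\in\mathcal G_1$. Moreover, for any such saddle point and every $\lambda\in\Delta$, $$D_{KL}(\hat{\mathsf p}_\lambda\,\|\,\pi_{g^*})\le\log\Big(\sum_{k=1}^pe^{\epsilon_k}\Big)-H^{\lambda^*}_\sigma(K|X)-D^{\lambda}_{JSD}(\hat{\mathsf p}_1,\dots,\hat{\mathsf p}_p),$$ where $\sigma_k=e^{\epsilon_k}/\sum_{j=1}^pe^{\epsilon_j}$, $\pi_\sigma=\sum_{k=1}^p\sigma_k\hat\pi_k$, and $$H^{\lambda^*}_\sigma(K|X)=\sum_{k=1}^p\lambda^*_k\,\mathbb E_{x\sim\hat{\mathsf p}_k}\Big[-\log\frac{\sigma_k\hat\pi_k(x)}{\pi_\sigma(x)}\Big].$$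
   Context: Fix an integer $p\ge 1$, $[1,p]=\{1,\dots,p\}$, $\Delta=\{\lambda\in\mathbb R^p:\lambda_k\ge 0,\ \sum_k\lambda_k=1\}$. Let $\hat{\mathsf p}_1,\dots,\hat{\mathsf p}_p$ be probability distributions with finite supports, $\mathcal X_0=\bigcup_k\mathrm{supp}(\hat{\mathsf p}_k)$, and $\hat\pi_1,\dots,\hat\pi_p$ probability distributions on $\mathcal X_0$. A gate is $g:\mathcal X_0\times[1,p]\to[0,1]$ with $\sum_kg(x,k)=1$ for each $x$; $\pi_g(x)=\sum_kg(x,k)\hat\pi_k(x)$, $Z_g=\sum_{x\in\mathcal X_0}\pi_g(x)$, $\mathcal G_1=\{g:Z_g=1\}$. For $\lambda\in\Delta$, $\hat{\mathsf p}_\lambda=\sum_k\lambda_k\hat{\mathsf p}_k$. $D_{KL}(P\|Q)=\sum_xP(x)\log\frac{P(x)}{Q(x)}\in[0,\infty]$ with conventions $0\log\frac0q=0$, $a\log\frac a0=+\infty$ for $a>0$. The Jensen–Shannon divergence is $D^\lambda_{JSD}(\hat{\mathsf p}_1,\dots,\hat{\mathsf p}_p)=\sum_{k=1}^p\lambda_kD_{KL}(\hat{\mathsf p}_k\,\|\,\hat{\mathsf p}_\lambda)$. *)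

theory Defs
  imports "HOL-Probability.Probability"
begin

text \<open>Index set [1,p] is {1..p}. Distributions with finite support are pmfs
  with finite set_pmf. Divergences take values in ereal.\<close>

definition prob_simplex :: "nat \<Rightarrow> (nat \<Rightarrow> real) set" where
  "prob_simplex p = {l. (\<forall>k\<in>{1..p}. 0 \<le> l k) \<and> (\<Sum>k=1..p. l k) = 1}"

definition X0 :: "(nat \<Rightarrow> 'a pmf) \<Rightarrow> nat \<Rightarrow> 'a set" where
  "X0 P p = (\<Union>k\<in>{1..p}. set_pmf (P k))"

text \<open>Kullback-Leibler divergence of (finitely supported) nonnegative functions,
  with conventions 0 log(0/q) = 0 and a log(a/0) = +infinity for a > 0.\<close>
definition KL :: "('a \<Rightarrow> real) \<Rightarrow> ('a \<Rightarrow> real) \<Rightarrow> ereal" where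
  "KL P Q = (if \<exists>x. P x \<noteq> 0 \<and> Q x = 0 then PInfty
             else ereal (\<Sum>x\<in>{x. P x \<noteq> 0}. P x * ln (P x / Q x)))"

definition is_gate :: "'a set \<Rightarrow> nat \<Rightarrow> ('a \<Rightarrow> nat \<Rightarrow> real) \<Rightarrow> bool" where
  "is_gate X p g \<longleftrightarrow> (\<forall>x\<in>X. (\<forall>k\<in>{1..p}. 0 \<le> g x k \<and> g x k \<le> 1) \<and> (\<Sum>k=1..p. g x k) = 1)"

definition pi_g :: "(nat \<Rightarrow> 'a pmf) \<Rightarrow> (nat \<Rightarrow> 'a pmf) \<Rightarrow> nat \<Rightarrow> ('a \<Rightarrow> nat \<Rightarrow> real) \<Rightarrow> 'a \<Rightarrow> real" where
  "pi_g P Pih p g x = (if x \<in> X0 P p then (\<Sum>k=1..p. g x k * pmf (Pih k) x) else 0)"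

definition Z_g :: "(nat \<Rightarrow> 'a pmf) \<Rightarrow> (nat \<Rightarrow> 'a pmf) \<Rightarrow> nat \<Rightarrow> ('a \<Rightarrow> nat \<Rightarrow> real) \<Rightarrow> real" where
  "Z_g P Pih p g = (\<Sum>x\<in>X0 P p. pi_g P Pih p g x)"

definition G1 :: "(nat \<Rightarrow> 'a pmf) \<Rightarrow> (nat \<Rightarrow> 'a pmf) \<Rightarrow> nat \<Rightarrow> ('a \<Rightarrow> nat \<Rightarrow> real) set" where
  "G1 P Pih p = {g. is_gate (X0 P p) p g \<and> Z_g P Pih p g = 1}"

definition mixture :: "(nat \<Rightarrow> 'a pmf) \<Rightarrow> nat \<Rightarrow> (nat \<Rightarrow> real) \<Rightarrow> 'a \<Rightarrow> real" where
  "mixture P p l x = (\<Sum>k=1..p. l k * pmf (P k) x)"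

definition Ltilde :: "(nat \<Rightarrow> 'a pmf) \<Rightarrow> (nat \<Rightarrow> 'a pmf) \<Rightarrow> nat \<Rightarrow> (nat \<Rightarrow> real) \<Rightarrow> ('a \<Rightarrow> nat \<Rightarrow> real) \<Rightarrow> ereal" where
  "Ltilde P Pih p l g = (\<Sum>k=1..p. ereal (l k) * KL (pmf (P k)) (pi_g P Pih p g))"

definition is_saddle :: "(nat \<Rightarrow> 'a pmf) \<Rightarrow> (nat \<Rightarrow> 'a pmf) \<Rightarrow> nat \<Rightarrow> (nat \<Rightarrow> real) \<Rightarrow> ('a \<Rightarrow> nat \<Rightarrow> real) \<Rightarrow> bool" where
  "is_saddle P Pih p ls gs \<longleftrightarrow> ls \<in> prob_simplex p \<and> gs \<in> G1 P Pih p \<and>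
     (\<forall>l\<in>prob_simplex p. \<forall>g\<in>G1 P Pih p.
        Ltilde P Pih p l gs \<le> Ltilde P Pih p ls gs \<and> Ltilde P Pih p ls gs \<le> Ltilde P Pih p ls g)"

definition JSD :: "(nat \<Rightarrow> 'a pmf) \<Rightarrow> nat \<Rightarrow> (nat \<Rightarrow> real) \<Rightarrow> ereal" where
  "JSD P p l = (\<Sum>k=1..p. ereal (l k) * KL (pmf (P k)) (mixture P p l))"

definition sigma :: "(nat \<Rightarrow> real) \<Rightarrow> nat \<Rightarrow> nat \<Rightarrow> real" where
  "sigma eps p k = exp (eps k) / (\<Sum>j=1..p. exp (eps j))"

definition pi_sigma :: "(nat \<Rightarrow> 'a pmf) \<Rightarrow> (nat \<Rightarrow> real) \<Rightarrow> nat \<Rightarrow> 'a \<Rightarrow> real" where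
  "pi_sigma Pih eps p x = (\<Sum>k=1..p. sigma eps p k * pmf (Pih k) x)"

definition H_cond :: "(nat \<Rightarrow> 'a pmf) \<Rightarrow> (nat \<Rightarrow> 'a pmf) \<Rightarrow> (nat \<Rightarrow> real) \<Rightarrow> nat \<Rightarrow> (nat \<Rightarrow> real) \<Rightarrow> real" where
  "H_cond P Pih eps p l = (\<Sum>k=1..p. l k *
     (\<Sum>x\<in>set_pmf (P k). pmf (P k) x *
        (- ln (sigma eps p k * pmf (Pih k) x / pi_sigma Pih eps p x))))"

end

theory Submission
  imports Defs
begin
lemma compact_Pi_UNIV:
  fixes S :: "'i \<Rightarrow> ('b::topological_space) set"
  assumes "\<And>i. compact (S i)"
  shows "compact (Pi\<^sub>E UNIV S)"
  using compactin_PiE[of "\<lambda>i. euclidean" UNIV S] assms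
  by (simp add: euclidean_product_topology)

lemma continuous_on_Max_image:
  fixes f :: "nat \<Rightarrow> 'c::topological_space \<Rightarrow> real"
  assumes "finite K" "K \<noteq> {}" "\<forall>k\<in>K. continuous_on C (f k)"
  shows "continuous_on C (\<lambda>c. Max ((\<lambda>k. f k c) ` K))"
  using assms
proof (induction K rule: finite_ne_induct)
  case (singleton x)
  then show ?case by simp
next
  case (insert x F)
  have eq: "(\<lambda>c. Max ((\<lambda>k. f k c) ` insert x F)) = (\<lambda>c. max (f x c) (Max ((\<lambda>k. f k c) ` F)))"
    using insert by (auto simp: Max_insert)
  show ?case unfolding eq using insert by (intro continuous_on_max) auto
qed

lemma sq_bound_aux:
  fixes a u d s z :: real
  assumes "z \<le> a + s * d"
  shows "(max 0 (z - u))^2 \<le> (max 0 (a - u) + s * d)^2"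
proof -
  have m: "max 0 (z - u) \<le> max 0 (a - u + s * d)" using assms by auto
  have "(max 0 (z - u))^2 \<le> (max 0 (a - u + s * d))^2"
    using m by (intro power_mono) auto
  also have "\<dots> \<le> (max 0 (a - u) + s * d)^2"
  proof (cases "a \<ge> u")
    case True
    then have "max 0 (a - u) = a - u" by simp
    then show ?thesis
      by (cases "a - u + s * d \<ge> 0") (auto simp: max_def)
  next
    case False
    then have "max 0 (a - u) = 0" by simp
    moreover have "(max 0 (a - u + s * d))^2 \<le> (s * d)^2"
    proof (cases "a - u + s * d \<ge> 0")
      case True
      then have "0 \<le> a - u + s * d" "a - u + s * d \<le> s * d" using False by auto
      then show ?thesis using True by (simp add: power_mono)
    next
      case F2: False
      then show ?thesis by (simp add: max_def)
    qed
    ultimately show ?thesis by simp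
  qed
  finally show ?thesis .
qed

lemma neg_lin_quad:
  fixes A B :: real
  assumes "\<forall>s. 0 < s \<and> s \<le> 1 \<longrightarrow> 0 \<le> 2 * s * A + s^2 * B"
  shows "0 \<le> A"
proof (rule ccontr)
  assume "\<not> 0 \<le> A"
  then have A: "A < 0" by simp
  have "0 \<le> 2 * A + B" using assms[rule_format, of 1] by simp
  then have B: "B > 0" using A by simp
  define s where "s = min 1 (- A / B)"
  have "- A / B > 0" using A B by (simp add: divide_neg_pos)
  then have s0: "0 < s" "s \<le> 1" by (auto simp: s_def)
  have "0 \<le> 2 * s * A + s^2 * B" using assms s0 by blast
  then have "0 \<le> s * (2 * A + s * B)" by (simp add: power2_eq_square algebra_simps)
  then have h: "0 \<le> 2 * A + s * B" using s0 by (simp add: zero_le_mult_iff)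
  have "s * B \<le> (- A / B) * B" using B by (intro mult_right_mono) (auto simp: s_def)
  also have "\<dots> = - A" using B by simp
  finally show False using h A by simp
qed

lemma nearest_step:
  fixes C :: "'c::topological_space set" and f :: "nat \<Rightarrow> 'c \<Rightarrow> real"
  assumes C: "compact C" "C \<noteq> {}" and K: "finite K"
    and cont: "\<forall>k\<in>K. continuous_on C (f k)"
    and conv: "\<forall>a\<in>C. \<forall>b\<in>C. \<forall>t\<in>{0..1}. mix t a b \<in> C \<and>
                 (\<forall>k\<in>K. f k (mix t a b) \<le> (1 - t) * f k a + t * f k b)"
    and low: "\<forall>c\<in>C. \<exists>k\<in>K. f k c > u"
  shows "\<exists>\<mu>. (\<forall>k\<in>K. 0 \<le> \<mu> k) \<and> (\<Sum>k\<in>K. \<mu> k) = 1 \<and> (\<forall>c\<in>C. u \<le> (\<Sum>k\<in>K. \<mu> k * f k c))"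
proof -
  define D where "D c = (\<Sum>k\<in>K. (max 0 (f k c - u))^2)" for c
  have contD: "continuous_on C D"
    unfolding D_def using cont
    by (intro continuous_intros) auto
  obtain c0 where c0: "c0 \<in> C" "\<forall>y\<in>C. D c0 \<le> D y"
    using continuous_attains_inf[OF C contD] by blast
  define l where "l k = max 0 (f k c0 - u)" for k
  have l0: "0 \<le> l k" for k by (simp add: l_def)
  have key: "0 \<le> (\<Sum>k\<in>K. l k * (f k c - f k c0))" if c: "c \<in> C" for c
  proof -
    define d where "d k = f k c - f k c0" for k
    have "\<forall>s. 0 < s \<and> s \<le> 1 \<longrightarrow> 0 \<le> 2 * s * (\<Sum>k\<in>K. l k * d k) + s^2 * (\<Sum>k\<in>K. (d k)^2)"
    proof (intro allI impI)
      fix s :: real assume s: "0 < s \<and> s \<le> 1"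
      have mC: "mix s c0 c \<in> C" using conv c0(1) c s by auto
      have "D c0 \<le> D (mix s c0 c)" using c0(2) mC by blast
      also have "\<dots> \<le> (\<Sum>k\<in>K. (l k + s * d k)^2)"
        unfolding D_def
      proof (rule sum_mono)
        fix k assume k: "k \<in> K"
        have "f k (mix s c0 c) \<le> (1 - s) * f k c0 + s * f k c" using conv c0(1) c s k by auto
        then have "f k (mix s c0 c) \<le> f k c0 + s * d k" by (simp add: d_def algebra_simps)
        then show "(max 0 (f k (mix s c0 c) - u))^2 \<le> (l k + s * d k)^2"
          unfolding l_def by (rule sq_bound_aux)
      qed
      also have "\<dots> = (\<Sum>k\<in>K. (l k)^2 + (2 * s) * (l k * d k) + s^2 * (d k)^2)"
        by (rule sum.cong) (simp_all add: power2_eq_square algebra_simps)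
      also have "\<dots> = (\<Sum>k\<in>K. (l k)^2) + 2 * s * (\<Sum>k\<in>K. l k * d k) + s^2 * (\<Sum>k\<in>K. (d k)^2)"
        by (simp add: sum.distrib sum_distrib_left)
      finally show "0 \<le> 2 * s * (\<Sum>k\<in>K. l k * d k) + s^2 * (\<Sum>k\<in>K. (d k)^2)"
        by (simp add: D_def l_def)
    qed
    then show ?thesis using neg_lin_quad unfolding d_def by blast
  qed
  obtain k0 where k0: "k0 \<in> K" "f k0 c0 > u" using low c0(1) by blast
  have lpos: "0 < (\<Sum>k\<in>K. l k)"
  proof -
    have "l k0 > 0" using k0 by (simp add: l_def)
    moreover have "l k0 \<le> (\<Sum>k\<in>K. l k)" using K k0 l0 by (intro member_le_sum) auto
    ultimately show ?thesis by simp
  qed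
  have c0bound: "u * (\<Sum>k\<in>K. l k) \<le> (\<Sum>k\<in>K. l k * f k c0)"
    unfolding sum_distrib_left
  proof (rule sum_mono)
    fix k assume "k \<in> K"
    show "u * l k \<le> l k * f k c0"
    proof (cases "f k c0 > u")
      case True then show ?thesis using l0[of k] by (metis less_imp_le mult.commute mult_left_mono)
    next
      case False then show ?thesis by (simp add: l_def)
    qed
  qed
  define \<mu> where "\<mu> k = l k / (\<Sum>j\<in>K. l j)" for k
  show ?thesis
  proof (intro exI conjI ballI)
    fix k show "0 \<le> \<mu> k" using l0 lpos by (simp add: \<mu>_def)
  next
    show "(\<Sum>k\<in>K. \<mu> k) = 1" using lpos by (simp add: \<mu>_def sum_divide_distrib[symmetric])
  next
    fix c assume c: "c \<in> C"
    have "u * (\<Sum>k\<in>K. l k) \<le> (\<Sum>k\<in>K. l k * f k c)"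
    proof -
      have "(\<Sum>k\<in>K. l k * f k c) - (\<Sum>k\<in>K. l k * f k c0) = (\<Sum>k\<in>K. l k * (f k c - f k c0))"
        by (simp add: sum_subtractf[symmetric] algebra_simps)
      then show ?thesis using key[OF c] c0bound by linarith
    qed
    then have "u \<le> (\<Sum>k\<in>K. l k * f k c) / (\<Sum>k\<in>K. l k)" using lpos by (simp add: field_simps)
    also have "\<dots> = (\<Sum>k\<in>K. \<mu> k * f k c)" by (simp add: \<mu>_def sum_divide_distrib)
    finally show "u \<le> (\<Sum>k\<in>K. \<mu> k * f k c)" .
  qed
qed

lemma minimax_finite:
  fixes C :: "'c::topological_space set" and f :: "nat \<Rightarrow> 'c \<Rightarrow> real"
  assumes C: "compact C" "C \<noteq> {}" and p: "1 \<le> p"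
    and cont: "\<forall>k\<in>{1..p}. continuous_on C (f k)"
    and conv: "\<forall>a\<in>C. \<forall>b\<in>C. \<forall>t\<in>{0..1}. mix t a b \<in> C \<and>
                 (\<forall>k\<in>{1..p}. f k (mix t a b) \<le> (1 - t) * f k a + t * f k b)"
  shows "\<exists>l c. l \<in> prob_simplex p \<and> c \<in> C \<and>
           (\<forall>k\<in>{1..p}. \<forall>c'\<in>C. f k c \<le> (\<Sum>j=1..p. l j * f j c'))"
proof -
  define K where "K = {1..p}"
  have K: "finite K" "K \<noteq> {}" using p by (auto simp: K_def)
  define F where "F c = Max ((\<lambda>k. f k c) ` K)" for c
  have contF: "continuous_on C F"
    unfolding F_def using K cont by (intro continuous_on_Max_image) (auto simp: K_def)
  obtain cs where cs: "cs \<in> C" "\<forall>y\<in>C. F cs \<le> F y"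
    using continuous_attains_inf[OF C contF] by blast
  define v where "v = F cs"
  have Fge: "f k c \<le> F c" if "k \<in> K" for k c
    unfolding F_def using K that by (intro Max_ge) auto
  have Fin: "\<exists>k\<in>K. F c = f k c" for c
  proof -
    have "F c \<in> (\<lambda>k. f k c) ` K" unfolding F_def using K by (intro Max_in) auto
    then show ?thesis by auto
  qed
  define u where "u n = v - 1 / (real n + 1)" for n :: nat
  have step: "\<exists>\<mu>. (\<forall>k\<in>K. 0 \<le> \<mu> k) \<and> (\<Sum>k\<in>K. \<mu> k) = 1 \<and> (\<forall>c\<in>C. u n \<le> (\<Sum>k\<in>K. \<mu> k * f k c))" for n
  proof (rule nearest_step[OF C K(1)])
    show "\<forall>k\<in>K. continuous_on C (f k)" using cont K_def by simp
    show "\<forall>a\<in>C. \<forall>b\<in>C. \<forall>t\<in>{0..1}. mix t a b \<in> C \<and> (\<forall>k\<in>K. f k (mix t a b) \<le> (1 - t) * f k a + t * f k b)"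
      using conv K_def by simp
    show "\<forall>c\<in>C. \<exists>k\<in>K. u n < f k c"
    proof
      fix c assume c: "c \<in> C"
      obtain k where k: "k \<in> K" "F c = f k c" using Fin by blast
      have "v \<le> F c" using cs c v_def by blast
      moreover have "u n < v" by (simp add: u_def)
      ultimately have "u n < f k c" using k by simp
      then show "\<exists>k\<in>K. u n < f k c" using k(1) by blast
    qed
  qed
  define Box where "Box = Pi\<^sub>E UNIV (\<lambda>k::nat. if k \<in> K then {0..1::real} else {0})"
  define Dl where "Dl = Box \<inter> {\<mu>. (\<Sum>k\<in>K. \<mu> k) = 1}"
  have cBox: "compact Box" unfolding Box_def by (rule compact_Pi_UNIV) simp
  have clsum: "closed {\<mu>::nat\<Rightarrow>real. (\<Sum>k\<in>K. \<mu> k) = 1}"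
    by (intro closed_Collect_eq continuous_on_sum continuous_on_const ballI continuous_on_product_coordinates)
  have cDl: "compact Dl" unfolding Dl_def using cBox clsum by (rule compact_Int_closed)
  define T where "T n = (\<Inter>c\<in>C. {\<mu>::nat\<Rightarrow>real. u n \<le> (\<Sum>k\<in>K. \<mu> k * f k c)})" for n
  have clT: "closed (T n)" for n
    unfolding T_def
    by (intro closed_INT ballI closed_Collect_le continuous_on_sum continuous_on_const continuous_on_mult continuous_on_product_coordinates)
  have umono: "u n \<le> u m" if "n \<le> m" for n m
    unfolding u_def using that by (simp add: frac_le)
  have "Dl \<inter> \<Inter> (T ` UNIV) \<noteq> {}"
  proof (rule compact_imp_fip_image[OF cDl clT])
    fix I' :: "nat set" assume I': "finite I'" "I' \<subseteq> UNIV"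
    define N where "N = Max (insert 0 I')"
    have NI: "n \<le> N" if "n \<in> I'" for n using I' that by (simp add: N_def)
    obtain \<mu> where mu: "\<forall>k\<in>K. 0 \<le> \<mu> k" "(\<Sum>k\<in>K. \<mu> k) = 1" "\<forall>c\<in>C. u N \<le> (\<Sum>k\<in>K. \<mu> k * f k c)"
      using step by blast
    define \<mu>' where "\<mu>' k = (if k \<in> K then \<mu> k else 0)" for k
    have s1: "(\<Sum>k\<in>K. \<mu>' k) = (\<Sum>k\<in>K. \<mu> k)" by (simp add: \<mu>'_def)
    have s2: "(\<Sum>k\<in>K. \<mu>' k * f k c) = (\<Sum>k\<in>K. \<mu> k * f k c)" for c by (simp add: \<mu>'_def)
    have le1: "\<mu> k \<le> 1" if "k \<in> K" for k
      using mu(1,2) K(1) that member_le_sum[of k K \<mu>] by auto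
    have "\<mu>' \<in> Box" unfolding Box_def \<mu>'_def using mu(1) le1 by auto
    then have "\<mu>' \<in> Dl" unfolding Dl_def using s1 mu(2) by auto
    moreover have "\<mu>' \<in> T n" if "n \<in> I'" for n
      unfolding T_def using mu(3) s2 umono[OF NI[OF that]] by force
    ultimately show "Dl \<inter> \<Inter> (T ` I') \<noteq> {}" by blast
  qed
  then obtain \<mu> where mu: "\<mu> \<in> Dl" "\<And>n. \<mu> \<in> T n" by blast
  have mu0: "0 \<le> \<mu> k" if "k \<in> K" for k
  proof -
    have "\<mu> k \<in> (if k \<in> K then {0..1} else {0})" using mu(1) unfolding Dl_def Box_def PiE_iff by blast
    then show ?thesis using that by simp
  qed
  have mu1: "(\<Sum>k\<in>K. \<mu> k) = 1" using mu(1) unfolding Dl_def by auto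
  have muv: "v \<le> (\<Sum>k\<in>K. \<mu> k * f k c)" if c: "c \<in> C" for c
  proof (rule ccontr)
    assume "\<not> v \<le> (\<Sum>k\<in>K. \<mu> k * f k c)"
    then have pos: "0 < v - (\<Sum>k\<in>K. \<mu> k * f k c)" by simp
    obtain n :: nat where n: "inverse (real (Suc n)) < v - (\<Sum>k\<in>K. \<mu> k * f k c)"
      using reals_Archimedean[OF pos] by blast
    have "u n \<le> (\<Sum>k\<in>K. \<mu> k * f k c)" using mu(2)[of n] c unfolding T_def by blast
    then show False using n by (simp add: u_def inverse_eq_divide add.commute)
  qed
  show ?thesis
  proof (intro exI conjI ballI)
    show "\<mu> \<in> prob_simplex p" using mu0 mu1 by (simp add: prob_simplex_def K_def)
    show "cs \<in> C" by fact
    fix k c' assume k: "k \<in> {1..p}" and c': "c' \<in> C"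
    have "f k cs \<le> v" using Fge[of k cs] k by (simp add: K_def v_def)
    also have "\<dots> \<le> (\<Sum>j=1..p. \<mu> j * f j c')" using muv[OF c'] by (simp add: K_def)
    finally show "f k cs \<le> (\<Sum>j=1..p. \<mu> j * f j c')" .
  qed
qed

lemma ln_conc:
  fixes a b t :: real
  assumes "0 < a" "0 < b" "0 \<le> t" "t \<le> 1"
  shows "(1 - t) * ln a + t * ln b \<le> ln ((1 - t) * a + t * b)"
  using concave_onD[OF ln_concave, of t a b] assms by simp

lemma KL_finite_eq:
  fixes P Q :: "'a \<Rightarrow> real"
  assumes A: "finite A" and sub: "\<forall>x. P x \<noteq> 0 \<longrightarrow> x \<in> A"
    and pos: "\<forall>x. P x \<noteq> 0 \<longrightarrow> 0 < P x \<and> 0 < Q x"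
  shows "KL P Q = ereal (\<Sum>x\<in>A. P x * (ln (P x) - ln (Q x)))"
proof -
  have nz: "\<not> (\<exists>x. P x \<noteq> 0 \<and> Q x = 0)" using pos by force
  have "(\<Sum>x\<in>{x. P x \<noteq> 0}. P x * ln (P x / Q x)) = (\<Sum>x\<in>{x. P x \<noteq> 0}. P x * (ln (P x) - ln (Q x)))"
    using pos by (intro sum.cong) (auto simp: ln_div)
  also have "\<dots> = (\<Sum>x\<in>A. P x * (ln (P x) - ln (Q x)))"
    using sub A by (intro sum.mono_neutral_left) auto
  finally show ?thesis using nz by (simp add: KL_def)
qed

lemma KL_infty:
  assumes "P x \<noteq> 0" "Q x = 0"
  shows "KL P Q = \<infinity>"
  using assms unfolding KL_def by auto

lemma KL_not_minf: "KL P Q \<noteq> - \<infinity>"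
  unfolding KL_def by auto

lemma ereal_wsum:
  fixes l r :: "nat \<Rightarrow> real" and E :: "nat \<Rightarrow> ereal"
  assumes "\<forall>k\<in>K. 0 \<le> l k" "\<forall>k\<in>K. 0 < l k \<longrightarrow> E k = ereal (r k)"
  shows "(\<Sum>k\<in>K. ereal (l k) * E k) = ereal (\<Sum>k\<in>K. l k * r k)"
proof -
  have "(\<Sum>k\<in>K. ereal (l k) * E k) = (\<Sum>k\<in>K. ereal (l k * r k))"
  proof (rule sum.cong)
    fix k assume k: "k \<in> K"
    show "ereal (l k) * E k = ereal (l k * r k)"
    proof (cases "l k = 0")
      case True then show ?thesis by (simp add: zero_ereal_def[symmetric])
    next
      case False then have "0 < l k" using assms(1) k by auto
      then show ?thesis using assms(2) k by simp
    qed
  qed simp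
  then show ?thesis by simp
qed

lemma ereal_wsum_inf:
  fixes l :: "nat \<Rightarrow> real" and E :: "nat \<Rightarrow> ereal"
  assumes K: "finite K" and "\<forall>k\<in>K. 0 \<le> l k" "\<forall>k\<in>K. E k \<noteq> - \<infinity>"
    and k0: "k0 \<in> K" "0 < l k0" "E k0 = \<infinity>"
  shows "(\<Sum>k\<in>K. ereal (l k) * E k) = \<infinity>"
proof -
  have "ereal (l k0) * E k0 = \<infinity>" using k0 by simp
  then show ?thesis using K k0(1) by (subst sum_Pinfty) blast
qed

locale msetting =
  fixes p :: nat and P Pih :: "nat \<Rightarrow> 'a pmf" and eps :: "nat \<Rightarrow> real"
  assumes p1: "1 \<le> p"
    and finP: "\<forall>k\<in>{1..p}. finite (set_pmf (P k))"
    and suppQ: "\<forall>k\<in>{1..p}. set_pmf (Pih k) \<subseteq> X0 P p"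
    and klb: "\<forall>k\<in>{1..p}. KL (pmf (P k)) (pmf (Pih k)) \<le> ereal (eps k)"
begin

abbreviation "X \<equiv> X0 P p"
abbreviation "pg g x \<equiv> pi_g P Pih p g x"

definition fk :: "nat \<Rightarrow> ('a \<Rightarrow> nat \<Rightarrow> real) \<Rightarrow> real" where
  "fk k g = (\<Sum>x\<in>X. pmf (P k) x * (ln (pmf (P k) x) - ln (pg g x)))"

lemma finX: "finite X"
  unfolding X0_def using finP by auto

lemma subP: "k \<in> {1..p} \<Longrightarrow> pmf (P k) x \<noteq> 0 \<Longrightarrow> x \<in> X"
  unfolding X0_def by (auto simp: set_pmf_iff)

lemma inX: "x \<in> X \<Longrightarrow> \<exists>k\<in>{1..p}. 0 < pmf (P k) x"
  unfolding X0_def by (auto simp: pmf_positive_iff)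

lemma sumP: "k \<in> {1..p} \<Longrightarrow> (\<Sum>x\<in>X. pmf (P k) x) = 1"
  using finX by (intro sum_pmf_eq_1) (auto simp: X0_def)

lemma sumQ: "k \<in> {1..p} \<Longrightarrow> (\<Sum>x\<in>X. pmf (Pih k) x) = 1"
  using finX suppQ by (intro sum_pmf_eq_1) auto

lemma qpos: assumes "k \<in> {1..p}" "pmf (P k) x \<noteq> 0" shows "0 < pmf (Pih k) x"
proof (rule ccontr)
  assume "\<not> 0 < pmf (Pih k) x"
  then have "pmf (Pih k) x = 0" using pmf_nonneg[of "Pih k" x] by linarith
  then have "KL (pmf (P k)) (pmf (Pih k)) = \<infinity>" using assms(2) KL_infty[of "pmf (P k)" x "pmf (Pih k)"] by simp
  moreover have "KL (pmf (P k)) (pmf (Pih k)) \<le> ereal (eps k)" using klb assms(1) by blast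
  ultimately show False by simp
qed

lemma klk: assumes k: "k \<in> {1..p}"
  shows "(\<Sum>x\<in>X. pmf (P k) x * (ln (pmf (P k) x) - ln (pmf (Pih k) x))) \<le> eps k"
proof -
  have "KL (pmf (P k)) (pmf (Pih k)) = ereal (\<Sum>x\<in>X. pmf (P k) x * (ln (pmf (P k) x) - ln (pmf (Pih k) x)))"
    using finX subP[OF k] qpos[OF k] pmf_nonneg[of "P k"]
    by (intro KL_finite_eq) (auto simp: order.not_eq_order_implies_strict)
  moreover have "KL (pmf (P k)) (pmf (Pih k)) \<le> ereal (eps k)" using klb k by blast
  ultimately show ?thesis by simp
qed

lemma pg_X: "x \<in> X \<Longrightarrow> pg g x = (\<Sum>j=1..p. g x j * pmf (Pih j) x)"
  by (simp add: pi_g_def)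

lemma KL_fk:
  assumes k: "k \<in> {1..p}" and pos: "\<forall>x\<in>X. pmf (P k) x \<noteq> 0 \<longrightarrow> 0 < pg g x"
  shows "KL (pmf (P k)) (pi_g P Pih p g) = ereal (fk k g)"
  unfolding fk_def
  using finX subP[OF k] pos pmf_nonneg[of "P k"]
  by (intro KL_finite_eq) (auto simp: order.not_eq_order_implies_strict)

end

context msetting begin

abbreviation "SS \<equiv> (\<Sum>j=1..p. exp (eps j))"
abbreviation "sg \<equiv> (\<lambda>(x::'a) k. sigma eps p k)"

lemma SS_pos: "0 < SS"
  using p1 by (intro sum_pos) auto

lemma sig_pos: "0 < sigma eps p k"
  using SS_pos by (simp add: sigma_def)

lemma sig_sum: "(\<Sum>k=1..p. sigma eps p k) = 1"
  using SS_pos by (simp add: sigma_def sum_divide_distrib[symmetric])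

lemma sig_le1: "k \<in> {1..p} \<Longrightarrow> sigma eps p k \<le> 1"
  using sig_sum member_le_sum[of k "{1..p}" "sigma eps p"] sig_pos
  by (metis finite_atLeastAtMost less_imp_le)

lemma ln_sig: "ln (sigma eps p k) = eps k - ln SS"
  using SS_pos by (simp add: sigma_def ln_div)

lemma pg_sg: "x \<in> X \<Longrightarrow> pg sg x = pi_sigma Pih eps p x"
  by (simp add: pi_g_def pi_sigma_def)

lemma sum_swapX:
  "(\<Sum>x\<in>X. \<Sum>j=1..p. c j * pmf (Pih j) x) = (\<Sum>j=1..p. c j)"
proof -
  have "(\<Sum>x\<in>X. \<Sum>j=1..p. c j * pmf (Pih j) x) = (\<Sum>j=1..p. \<Sum>x\<in>X. c j * pmf (Pih j) x)"
    by (rule sum.swap)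
  also have "\<dots> = (\<Sum>j=1..p. c j)"
    by (intro sum.cong) (auto simp: sum_distrib_left[symmetric] sumQ)
  finally show ?thesis .
qed

lemma sg_G1: "sg \<in> G1 P Pih p"
proof -
  have "is_gate X p sg" unfolding is_gate_def using sig_pos sig_le1 sig_sum by (auto intro: less_imp_le)
  moreover have "Z_g P Pih p sg = 1"
    unfolding Z_g_def using sum_swapX[of "sigma eps p"] sig_sum
    by (simp add: pi_g_def)
  ultimately show ?thesis by (simp add: G1_def)
qed

lemma pis_pos: assumes k: "k \<in> {1..p}" and x: "pmf (P k) x \<noteq> 0"
  shows "0 < pi_sigma Pih eps p x" "sigma eps p k * pmf (Pih k) x \<le> pi_sigma Pih eps p x"
proof -
  show le: "sigma eps p k * pmf (Pih k) x \<le> pi_sigma Pih eps p x"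
    unfolding pi_sigma_def using k sig_pos
    by (intro member_le_sum) (auto simp: less_imp_le[OF sig_pos])
  have "0 < sigma eps p k * pmf (Pih k) x" using sig_pos qpos[OF k x] by simp
  then show "0 < pi_sigma Pih eps p x" using le by linarith
qed

definition hh :: "nat \<Rightarrow> 'a \<Rightarrow> real" where
  "hh k x = ln (sigma eps p k * pmf (Pih k) x / pi_sigma Pih eps p x)"

lemma KL_sg: "k \<in> {1..p} \<Longrightarrow> KL (pmf (P k)) (pi_g P Pih p sg) = ereal (fk k sg)"
  by (intro KL_fk) (auto simp: pg_sg pis_pos)

lemma fk_sg_bound: assumes k: "k \<in> {1..p}"
  shows "fk k sg \<le> ln SS + (\<Sum>x\<in>X. pmf (P k) x * hh k x)"
proof -
  have pt: "pmf (P k) x * (ln (pmf (P k) x) - ln (pg sg x)) =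
      pmf (P k) x * (ln (pmf (P k) x) - ln (pmf (Pih k) x)) + pmf (P k) x * hh k x
      - pmf (P k) x * ln (sigma eps p k)" if x: "x \<in> X" for x
  proof (cases "pmf (P k) x = 0")
    case True then show ?thesis by simp
  next
    case False
    have q: "0 < pmf (Pih k) x" using qpos[OF k False] .
    have pis: "0 < pi_sigma Pih eps p x" using pis_pos[OF k False] by simp
    have "hh k x = ln (sigma eps p k) + ln (pmf (Pih k) x) - ln (pi_sigma Pih eps p x)"
      unfolding hh_def using q pis sig_pos[of k] by (simp add: ln_div ln_mult)
    then have "pmf (P k) x * hh k x = pmf (P k) x * ln (sigma eps p k) + pmf (P k) x * ln (pmf (Pih k) x) - pmf (P k) x * ln (pi_sigma Pih eps p x)"
      by (simp add: right_diff_distrib distrib_left)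
    then show ?thesis using x by (simp add: pg_sg algebra_simps)
  qed
  have "fk k sg = (\<Sum>x\<in>X. pmf (P k) x * (ln (pmf (P k) x) - ln (pmf (Pih k) x)))
      + (\<Sum>x\<in>X. pmf (P k) x * hh k x) - (\<Sum>x\<in>X. pmf (P k) x) * ln (sigma eps p k)"
    unfolding fk_def using pt by (simp add: sum.distrib sum_subtractf sum_distrib_right)
  also have "\<dots> \<le> eps k + (\<Sum>x\<in>X. pmf (P k) x * hh k x) - ln (sigma eps p k)"
    using klk[OF k] sumP[OF k] by simp
  also have "\<dots> = ln SS + (\<Sum>x\<in>X. pmf (P k) x * hh k x)" by (simp add: ln_sig)
  finally show ?thesis .
qed

lemma H_cond_eq: "H_cond P Pih eps p l = - (\<Sum>k=1..p. l k * (\<Sum>x\<in>X. pmf (P k) x * hh k x))"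
proof -
  have "(\<Sum>x\<in>set_pmf (P k). pmf (P k) x * (- ln (sigma eps p k * pmf (Pih k) x / pi_sigma Pih eps p x)))
      = - (\<Sum>x\<in>X. pmf (P k) x * hh k x)" if k: "k \<in> {1..p}" for k
  proof -
    have "(\<Sum>x\<in>set_pmf (P k). pmf (P k) x * (- ln (sigma eps p k * pmf (Pih k) x / pi_sigma Pih eps p x)))
        = (\<Sum>x\<in>X. pmf (P k) x * (- hh k x))"
      unfolding hh_def using finX subP[OF k]
      by (intro sum.mono_neutral_left) (auto simp: set_pmf_iff)
    then show ?thesis by (simp add: sum_negf)
  qed
  then have "H_cond P Pih eps p l = (\<Sum>k=1..p. l k * (- (\<Sum>x\<in>X. pmf (P k) x * hh k x)))"
    unfolding H_cond_def by (intro sum.cong refl) simp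
  then show ?thesis by (simp add: sum_negf)
qed

lemma Ltilde_sg: assumes l: "l \<in> prob_simplex p"
  shows "Ltilde P Pih p l sg \<le> ereal (ln SS - H_cond P Pih eps p l)"
proof -
  have l0: "\<forall>k\<in>{1..p}. 0 \<le> l k" and l1: "(\<Sum>k=1..p. l k) = 1" using l by (auto simp: prob_simplex_def)
  have "Ltilde P Pih p l sg = ereal (\<Sum>k=1..p. l k * fk k sg)"
    unfolding Ltilde_def using l0 KL_sg by (intro ereal_wsum) auto
  moreover have "(\<Sum>k=1..p. l k * fk k sg) \<le> (\<Sum>k=1..p. l k * (ln SS + (\<Sum>x\<in>X. pmf (P k) x * hh k x)))"
    using l0 fk_sg_bound by (intro sum_mono mult_left_mono) auto
  moreover have "(\<Sum>k=1..p. l k * (ln SS + (\<Sum>x\<in>X. pmf (P k) x * hh k x))) = ln SS - H_cond P Pih eps p l"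
    using l1 by (simp add: H_cond_eq distrib_left sum.distrib sum_distrib_right[symmetric])
  ultimately show ?thesis by simp
qed

end

context msetting begin

lemma pg_nonneg: assumes "is_gate X p g" shows "0 \<le> pg g x"
proof (cases "x \<in> X")
  case True
  then show ?thesis using assms unfolding is_gate_def pi_g_def
    by (auto intro!: sum_nonneg mult_nonneg_nonneg)
qed (simp add: pi_g_def)

lemma mix_ge: assumes l: "\<forall>k\<in>{1..p}. 0 \<le> l k" and k: "k \<in> {1..p}"
  shows "l k * pmf (P k) x \<le> mixture P p l x"
  unfolding mixture_def using l k by (intro member_le_sum) auto

lemma mix_nonneg: assumes l: "\<forall>k\<in>{1..p}. 0 \<le> l k" shows "0 \<le> mixture P p l x"
  unfolding mixture_def using l by (intro sum_nonneg) auto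

lemma mix_nz: assumes "mixture P p l x \<noteq> 0"
  shows "\<exists>k\<in>{1..p}. l k \<noteq> 0 \<and> pmf (P k) x \<noteq> 0"
proof (rule ccontr)
  assume "\<not> ?thesis"
  then have "mixture P p l x = 0" unfolding mixture_def by (intro sum.neutral) auto
  then show False using assms by simp
qed

lemma sum_mix: "(\<Sum>k=1..p. l k * (\<Sum>x\<in>X. pmf (P k) x * a x)) = (\<Sum>x\<in>X. mixture P p l x * a x)"
proof -
  have "(\<Sum>k=1..p. l k * (\<Sum>x\<in>X. pmf (P k) x * a x)) = (\<Sum>k=1..p. \<Sum>x\<in>X. l k * pmf (P k) x * a x)"
    by (simp add: sum_distrib_left mult.assoc)
  also have "\<dots> = (\<Sum>x\<in>X. \<Sum>k=1..p. l k * pmf (P k) x * a x)" by (rule sum.swap)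
  also have "\<dots> = (\<Sum>x\<in>X. mixture P p l x * a x)"
    by (simp add: mixture_def sum_distrib_right)
  finally show ?thesis .
qed

lemma part2:
  assumes sad: "is_saddle P Pih p ls gs" and l: "l \<in> prob_simplex p"
  shows "KL (mixture P p l) (pi_g P Pih p gs) \<le> ereal (ln SS - H_cond P Pih eps p ls) - JSD P p l"
proof -
  define B where "B = ln SS - H_cond P Pih eps p ls"
  have ls: "ls \<in> prob_simplex p" and gs: "gs \<in> G1 P Pih p" using sad by (auto simp: is_saddle_def)
  have "Ltilde P Pih p l gs \<le> Ltilde P Pih p ls gs" using sad l gs by (auto simp: is_saddle_def)
  also have "\<dots> \<le> Ltilde P Pih p ls sg" using sad l sg_G1 by (auto simp: is_saddle_def)
  also have "\<dots> \<le> ereal B" using Ltilde_sg[OF ls] by (simp add: B_def)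
  finally have LB: "Ltilde P Pih p l gs \<le> ereal B" .
  have l0: "\<forall>k\<in>{1..p}. 0 \<le> l k" and l1: "(\<Sum>k=1..p. l k) = 1" using l by (auto simp: prob_simplex_def)
  have gate: "is_gate X p gs" using gs by (simp add: G1_def)
  have fin: "0 < pg gs x" if k: "k \<in> {1..p}" "0 < l k" "pmf (P k) x \<noteq> 0" for k x
  proof (rule ccontr)
    assume "\<not> 0 < pg gs x"
    then have "pg gs x = 0" using pg_nonneg[OF gate, of x] by linarith
    then have "KL (pmf (P k)) (pi_g P Pih p gs) = \<infinity>" using k(3) KL_infty[of "pmf (P k)" x] by simp
    then have "Ltilde P Pih p l gs = \<infinity>" unfolding Ltilde_def
      using l0 k KL_not_minf by (intro ereal_wsum_inf) auto
    then show False using LB by simp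
  qed
  have Lt: "Ltilde P Pih p l gs = ereal (\<Sum>k=1..p. l k * fk k gs)"
    unfolding Ltilde_def using l0 fin by (intro ereal_wsum ballI impI KL_fk) auto
  define mx where "mx = mixture P p l"
  have mxpos: "0 < mx x" if "k \<in> {1..p}" "0 < l k" "pmf (P k) x \<noteq> 0" for k x
  proof -
    have "0 < l k * pmf (P k) x" using that pmf_nonneg[of "P k" x] by (simp add: order.not_eq_order_implies_strict)
    then show ?thesis using mix_ge[OF l0 that(1), of x] by (simp add: mx_def)
  qed
  have mxX: "x \<in> X" if "mx x \<noteq> 0" for x
    using mix_nz[of l x] that subP by (auto simp: mx_def)
  have JS: "JSD P p l = ereal (\<Sum>k=1..p. l k * (\<Sum>x\<in>X. pmf (P k) x * (ln (pmf (P k) x) - ln (mx x))))"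
    unfolding JSD_def mx_def[symmetric] using l0
  proof (intro ereal_wsum ballI impI)
    fix k assume k: "k \<in> {1..p}" "0 < l k"
    show "KL (pmf (P k)) mx = ereal (\<Sum>x\<in>X. pmf (P k) x * (ln (pmf (P k) x) - ln (mx x)))"
      using finX subP[OF k(1)] mxpos[OF k] pmf_nonneg[of "P k"]
      by (intro KL_finite_eq) (auto simp: order.not_eq_order_implies_strict)
  qed auto
  have KM: "KL mx (pg gs) = ereal (\<Sum>x\<in>X. mx x * (ln (mx x) - ln (pg gs x)))"
  proof (intro KL_finite_eq finX allI impI conjI)
    fix x assume x: "mx x \<noteq> 0"
    show "x \<in> X" using mxX[OF x] .
    show "0 < mx x" using x mix_nonneg[OF l0, of x] by (simp add: mx_def order.not_eq_order_implies_strict)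
    obtain k where k: "k \<in> {1..p}" "l k \<noteq> 0" "pmf (P k) x \<noteq> 0" using mix_nz[of l x] x by (auto simp: mx_def)
    then have "0 < l k" using l0 by (simp add: order.not_eq_order_implies_strict)
    then show "0 < pg gs x" using fin k by blast
  qed
  have ident: "(\<Sum>k=1..p. l k * fk k gs) = (\<Sum>x\<in>X. mx x * (ln (mx x) - ln (pg gs x)))
      + (\<Sum>k=1..p. l k * (\<Sum>x\<in>X. pmf (P k) x * (ln (pmf (P k) x) - ln (mx x))))"
  proof -
    have "(\<Sum>k=1..p. l k * fk k gs) = (\<Sum>k=1..p. l k * (\<Sum>x\<in>X. pmf (P k) x * (ln (pmf (P k) x) - ln (mx x))))
        + (\<Sum>k=1..p. l k * (\<Sum>x\<in>X. pmf (P k) x * (ln (mx x) - ln (pg gs x))))"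
      unfolding fk_def
      by (simp add: sum.distrib[symmetric] distrib_left[symmetric] algebra_simps)
    also have "(\<Sum>k=1..p. l k * (\<Sum>x\<in>X. pmf (P k) x * (ln (mx x) - ln (pg gs x))))
        = (\<Sum>x\<in>X. mx x * (ln (mx x) - ln (pg gs x)))"
      unfolding mx_def by (rule sum_mix)
    finally show ?thesis by simp
  qed
  have "ereal (\<Sum>k=1..p. l k * fk k gs) \<le> ereal B" using LB Lt by simp
  then have "(\<Sum>k=1..p. l k * fk k gs) \<le> B" by simp
  then show ?thesis
    unfolding mx_def[symmetric] B_def[symmetric] using KM JS ident by simp
qed

end

lemma ev2_cont: "continuous_on S (\<lambda>g::'a \<Rightarrow> nat \<Rightarrow> real. g x k)"
proof -
  have "continuous_on UNIV (\<lambda>g::'a \<Rightarrow> nat \<Rightarrow> real. g x)" by simp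
  then have "continuous_on UNIV (\<lambda>g::'a \<Rightarrow> nat \<Rightarrow> real. g x k)"
    by (rule continuous_on_product_then_coordinatewise)
  then show ?thesis by (rule continuous_on_subset) auto
qed

context msetting begin

definition pq :: "('a \<Rightarrow> nat \<Rightarrow> real) \<Rightarrow> 'a \<Rightarrow> real" where
  "pq g x = (\<Sum>j=1..p. g x j * pmf (Pih j) x)"

definition Box :: "('a \<Rightarrow> nat \<Rightarrow> real) set" where
  "Box = {g. \<forall>x k. g x k \<in> (if x \<in> X \<and> k \<in> {1..p} then {0..1} else {0})}"

definition Cd :: "('a \<Rightarrow> real) \<Rightarrow> ('a \<Rightarrow> nat \<Rightarrow> real) set" where
  "Cd d = Box \<inter> {g. \<forall>x\<in>X. (\<Sum>k=1..p. g x k) = 1} \<inter> {g. (\<Sum>x\<in>X. pq g x) = 1}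
          \<inter> {g. \<forall>x\<in>X. d x \<le> pq g x}"

definition mixf :: "real \<Rightarrow> ('a \<Rightarrow> nat \<Rightarrow> real) \<Rightarrow> ('a \<Rightarrow> nat \<Rightarrow> real) \<Rightarrow> ('a \<Rightarrow> nat \<Rightarrow> real)" where
  "mixf t a b = (\<lambda>x k. (1 - t) * a x k + t * b x k)"

lemma pq_cont: "continuous_on S (\<lambda>g. pq g x)"
  unfolding pq_def by (intro continuous_on_sum continuous_on_mult ev2_cont continuous_on_const)

lemma compact_Box: "compact Box"
proof -
  have "Box = Pi\<^sub>E UNIV (\<lambda>x. Pi\<^sub>E UNIV (\<lambda>k. if x \<in> X \<and> k \<in> {1..p} then {0..1::real} else {0}))"
    unfolding Box_def PiE_UNIV_domain Pi_def by blast
  moreover have "compact (Pi\<^sub>E UNIV (\<lambda>x. Pi\<^sub>E UNIV (\<lambda>k. if x \<in> X \<and> k \<in> {1..p} then {0..1::real} else {0})))"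
  proof (rule compact_Pi_UNIV)
    fix x
    show "compact (Pi\<^sub>E UNIV (\<lambda>k. if x \<in> X \<and> k \<in> {1..p} then {0..1::real} else {0}))"
      by (rule compact_Pi_UNIV) simp
  qed
  ultimately show ?thesis by simp
qed

lemma compact_Cd: "compact (Cd d)"
proof -
  have c1: "closed {g::'a\<Rightarrow>nat\<Rightarrow>real. \<forall>x\<in>X. (\<Sum>k=1..p. g x k) = 1}"
  proof -
    have "{g::'a\<Rightarrow>nat\<Rightarrow>real. \<forall>x\<in>X. (\<Sum>k=1..p. g x k) = 1} = (\<Inter>x\<in>X. {g. (\<Sum>k=1..p. g x k) = 1})" by auto
    also have "closed \<dots>"
      by (intro closed_INT ballI closed_Collect_eq continuous_on_sum ev2_cont continuous_on_const)
    finally show ?thesis .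
  qed
  have c2: "closed {g. (\<Sum>x\<in>X. pq g x) = 1}"
    by (intro closed_Collect_eq continuous_on_sum pq_cont continuous_on_const)
  have c3: "closed {g. \<forall>x\<in>X. d x \<le> pq g x}"
  proof -
    have "{g. \<forall>x\<in>X. d x \<le> pq g x} = (\<Inter>x\<in>X. {g. d x \<le> pq g x})" by auto
    also have "closed \<dots>"
      by (intro closed_INT ballI closed_Collect_le pq_cont continuous_on_const)
    finally show ?thesis .
  qed
  show ?thesis unfolding Cd_def
    by (intro compact_Int_closed compact_Box c1 c2 c3)
qed

lemma pq_mixf: "pq (mixf t a b) x = (1 - t) * pq a x + t * pq b x"
proof -
  have "pq (mixf t a b) x = (\<Sum>j=1..p. (1 - t) * (a x j * pmf (Pih j) x) + t * (b x j * pmf (Pih j) x))"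
    unfolding pq_def mixf_def by (intro sum.cong) (auto simp: algebra_simps)
  then show ?thesis by (simp add: sum.distrib sum_distrib_left pq_def)
qed

lemma Box_mem: "g \<in> Box \<Longrightarrow> g x k \<in> (if x \<in> X \<and> k \<in> {1..p} then {0..1} else {0})"
  unfolding Box_def by blast

lemma Box_D: "g \<in> Box \<Longrightarrow> x \<in> X \<Longrightarrow> k \<in> {1..p} \<Longrightarrow> 0 \<le> g x k \<and> g x k \<le> 1"
  using Box_mem[of g x k] by simp

lemma Box_out: "g \<in> Box \<Longrightarrow> \<not> (x \<in> X \<and> k \<in> {1..p}) \<Longrightarrow> g x k = 0"
proof -
  assume a: "g \<in> Box" "\<not> (x \<in> X \<and> k \<in> {1..p})"
  then have "(if x \<in> X \<and> k \<in> {1..p} then {0..1} else {0}) = {0::real}" by presburger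
  then show ?thesis using Box_mem[OF a(1), of x k] by simp
qed

lemma Box_I: "(\<And>x k. x \<in> X \<Longrightarrow> k \<in> {1..p} \<Longrightarrow> 0 \<le> g x k \<and> g x k \<le> 1) \<Longrightarrow>
    (\<And>x k. \<not> (x \<in> X \<and> k \<in> {1..p}) \<Longrightarrow> g x k = 0) \<Longrightarrow> g \<in> Box"
  unfolding Box_def by auto

lemma pq_pos: assumes "g \<in> Cd d" "x \<in> X" "\<forall>y\<in>X. 0 < d y" shows "0 < pq g x"
proof -
  have "d x \<le> pq g x" using assms(1,2) unfolding Cd_def by blast
  moreover have "0 < d x" using assms(2,3) by blast
  ultimately show ?thesis by linarith
qed

lemma fk_Cd: assumes "g \<in> Cd d"
  shows "fk k g = (\<Sum>x\<in>X. pmf (P k) x * (ln (pmf (P k) x) - ln (pq g x)))"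
  unfolding fk_def by (intro sum.cong) (auto simp: pg_X pq_def)

lemma fk_cont: assumes d: "\<forall>y\<in>X. 0 < d y" shows "continuous_on (Cd d) (fk k)"
proof -
  have "continuous_on (Cd d) (\<lambda>g. \<Sum>x\<in>X. pmf (P k) x * (ln (pmf (P k) x) - ln (pq g x)))"
    using pq_pos[OF _ _ d]
    by (intro continuous_on_sum continuous_on_mult continuous_on_diff continuous_on_const
          continuous_on_ln pq_cont) (auto simp: less_imp_neq[symmetric])
  then show ?thesis by (rule continuous_on_cong[THEN iffD1, rotated 2]) (auto simp: fk_Cd)
qed

lemma mixf_Cd: assumes a: "a \<in> Cd d" and b: "b \<in> Cd d" and t: "0 \<le> t" "t \<le> 1"
  shows "mixf t a b \<in> Cd d"
proof -
  have aB: "a \<in> Box" and bB: "b \<in> Box" using a b by (auto simp: Cd_def)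
  have "mixf t a b \<in> Box"
  proof (rule Box_I)
    fix x k assume xk: "x \<in> X" "k \<in> {1..p}"
    have "0 \<le> a x k" "a x k \<le> 1" "0 \<le> b x k" "b x k \<le> 1" using Box_D[OF aB xk] Box_D[OF bB xk] by auto
    then have "(1 - t) * a x k \<le> (1 - t) * 1" "t * b x k \<le> t * 1" using t by (intro mult_left_mono; simp)+
    moreover have "0 \<le> (1 - t) * a x k" "0 \<le> t * b x k" using t \<open>0 \<le> a x k\<close> \<open>0 \<le> b x k\<close> by auto
    ultimately show "0 \<le> mixf t a b x k \<and> mixf t a b x k \<le> 1" unfolding mixf_def by auto
  next
    fix x k assume "\<not> (x \<in> X \<and> k \<in> {1..p})"
    then show "mixf t a b x k = 0" unfolding mixf_def using Box_out[OF aB] Box_out[OF bB] by simp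
  qed
  moreover have "\<forall>x\<in>X. (\<Sum>k=1..p. mixf t a b x k) = 1"
    using a b unfolding Cd_def mixf_def by (simp add: sum.distrib sum_distrib_left[symmetric])
  moreover have "(\<Sum>x\<in>X. pq (mixf t a b) x) = 1"
    using a b unfolding Cd_def by (simp add: pq_mixf sum.distrib sum_distrib_left[symmetric])
  moreover have "\<forall>x\<in>X. d x \<le> pq (mixf t a b) x"
  proof
    fix x assume x: "x \<in> X"
    have "d x \<le> pq a x" "d x \<le> pq b x" using a b x by (auto simp: Cd_def)
    then have "(1 - t) * d x \<le> (1 - t) * pq a x" "t * d x \<le> t * pq b x" using t by (auto intro: mult_left_mono)
    then show "d x \<le> pq (mixf t a b) x" by (simp add: pq_mixf algebra_simps)
  qed
  ultimately show ?thesis by (simp add: Cd_def)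
qed

lemma fk_conv: assumes d: "\<forall>y\<in>X. 0 < d y" and a: "a \<in> Cd d" and b: "b \<in> Cd d" and t: "0 \<le> t" "t \<le> 1"
  shows "fk k (mixf t a b) \<le> (1 - t) * fk k a + t * fk k b"
proof -
  have m: "mixf t a b \<in> Cd d" using mixf_Cd[OF a b t] .
  have "(\<Sum>x\<in>X. pmf (P k) x * (ln (pmf (P k) x) - ln (pq (mixf t a b) x)))
      \<le> (\<Sum>x\<in>X. (1 - t) * (pmf (P k) x * (ln (pmf (P k) x) - ln (pq a x))) + t * (pmf (P k) x * (ln (pmf (P k) x) - ln (pq b x))))"
  proof (rule sum_mono)
    fix x assume x: "x \<in> X"
    have A: "0 < pq a x" and B: "0 < pq b x" using pq_pos[OF a x d] pq_pos[OF b x d] .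
    have "(1 - t) * ln (pq a x) + t * ln (pq b x) \<le> ln (pq (mixf t a b) x)"
      unfolding pq_mixf using ln_conc[OF A B t] .
    then have "pmf (P k) x * ((1 - t) * ln (pq a x) + t * ln (pq b x)) \<le> pmf (P k) x * ln (pq (mixf t a b) x)"
      by (intro mult_left_mono) auto
    then show "pmf (P k) x * (ln (pmf (P k) x) - ln (pq (mixf t a b) x))
      \<le> (1 - t) * (pmf (P k) x * (ln (pmf (P k) x) - ln (pq a x))) + t * (pmf (P k) x * (ln (pmf (P k) x) - ln (pq b x)))"
      by (simp add: algebra_simps)
  qed
  then show ?thesis using fk_Cd[OF a] fk_Cd[OF b] fk_Cd[OF m]
    by (simp add: sum.distrib sum_distrib_left)
qed

end

context msetting begin

definition Hs :: real where "Hs = (\<Sum>k=1..p. \<bar>\<Sum>x\<in>X. pmf (P k) x * ln (pmf (P k) x)\<bar>)"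

lemma pq_le1: assumes "g \<in> Box" "\<forall>x\<in>X. (\<Sum>k=1..p. g x k) = 1" "x \<in> X" shows "pq g x \<le> 1"
proof -
  have "pq g x \<le> (\<Sum>j=1..p. g x j * 1)"
    unfolding pq_def using Box_D[OF assms(1) assms(3)]
    by (intro sum_mono mult_left_mono) (auto simp: pmf_le_1)
  then show ?thesis using assms(2,3) by simp
qed

lemma lower_bound:
  assumes pos: "\<forall>y\<in>X. 0 < pq g y \<and> pq g y \<le> 1" and k: "k \<in> {1..p}"
    and fM: "fk k g \<le> M" and x: "x \<in> X" and px: "0 < pmf (P k) x" and M0: "0 \<le> M"
    and fkeq: "fk k g = (\<Sum>x\<in>X. pmf (P k) x * (ln (pmf (P k) x) - ln (pq g x)))"
  shows "exp (- ((M + Hs) / pmf (P k) x)) \<le> pq g x"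
proof -
  define T where "T = (\<Sum>y\<in>X. pmf (P k) y * (- ln (pq g y)))"
  have tnn: "0 \<le> pmf (P k) y * (- ln (pq g y))" if "y \<in> X" for y
    using pos that by (intro mult_nonneg_nonneg) auto
  have "pmf (P k) x * (- ln (pq g x)) \<le> T"
    unfolding T_def using finX x tnn by (intro member_le_sum) auto
  moreover have "fk k g = (\<Sum>x\<in>X. pmf (P k) x * ln (pmf (P k) x)) + T"
    unfolding fkeq T_def by (simp add: sum.distrib[symmetric] algebra_simps)
  moreover have "- (\<Sum>x\<in>X. pmf (P k) x * ln (pmf (P k) x)) \<le> Hs"
  proof -
    have "\<bar>\<Sum>x\<in>X. pmf (P k) x * ln (pmf (P k) x)\<bar> \<le> Hs"
      unfolding Hs_def using k by (intro member_le_sum[where f = "\<lambda>k. \<bar>\<Sum>x\<in>X. pmf (P k) x * ln (pmf (P k) x)\<bar>"]) auto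
    then show ?thesis by linarith
  qed
  ultimately have "pmf (P k) x * (- ln (pq g x)) \<le> M + Hs" using fM by linarith
  then have "- ln (pq g x) \<le> (M + Hs) / pmf (P k) x" using px by (simp add: pos_le_divide_eq mult.commute)
  then have "- ((M + Hs) / pmf (P k) x) \<le> ln (pq g x)" by linarith
  then have "exp (- ((M + Hs) / pmf (P k) x)) \<le> exp (ln (pq g x))" by simp
  also have "\<dots> = pq g x" using pos x by simp
  finally show ?thesis .
qed

end

context msetting begin

definition sgate :: "'a \<Rightarrow> nat \<Rightarrow> real" where
  "sgate x k = (if x \<in> X \<and> k \<in> {1..p} then sigma eps p k else 0)"

definition MM :: real where "MM = (\<Sum>k=1..p. \<bar>fk k sgate\<bar>)"

definition kx :: "'a \<Rightarrow> nat" where "kx x = (SOME k. k \<in> {1..p} \<and> 0 < pmf (P k) x)"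

lemma kx: assumes "x \<in> X" shows "kx x \<in> {1..p} \<and> 0 < pmf (P (kx x)) x"
proof -
  have "\<exists>k. k \<in> {1..p} \<and> 0 < pmf (P k) x" using inX[OF assms] by blast
  then show ?thesis unfolding kx_def by (rule someI_ex)
qed

definition dd :: "'a \<Rightarrow> real" where "dd x = exp (- ((MM + Hs) / pmf (P (kx x)) x)) / 2"

lemma dd_pos: "0 < dd x" by (simp add: dd_def)

lemma MM0: "0 \<le> MM" unfolding MM_def by (intro sum_nonneg) auto

lemma fk_sgate_le: "k \<in> {1..p} \<Longrightarrow> fk k sgate \<le> MM"
  unfolding MM_def using member_le_sum[of k "{1..p}" "\<lambda>k. \<bar>fk k sgate\<bar>"] by auto

lemma pq_sgate: "x \<in> X \<Longrightarrow> pq sgate x = pi_sigma Pih eps p x"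
  unfolding pq_def pi_sigma_def sgate_def by (intro sum.cong) auto

lemma gate_Cd: assumes "g \<in> Box" "\<forall>x\<in>X. (\<Sum>k=1..p. g x k) = 1" "\<forall>x\<in>X. 0 < pq g x" "(\<Sum>x\<in>X. pq g x) = 1"
   "\<forall>k\<in>{1..p}. fk k g \<le> MM"
  shows "\<forall>x\<in>X. 2 * dd x \<le> pq g x"
proof
  fix x assume x: "x \<in> X"
  have pos: "\<forall>y\<in>X. 0 < pq g y \<and> pq g y \<le> 1" using assms(3) pq_le1[OF assms(1,2)] by auto
  have fkeq: "fk k g = (\<Sum>x\<in>X. pmf (P k) x * (ln (pmf (P k) x) - ln (pq g x)))" for k
    unfolding fk_def by (intro sum.cong) (auto simp: pg_X pq_def)
  show "2 * dd x \<le> pq g x"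
    using lower_bound[OF pos _ _ x _ MM0 fkeq] kx[OF x] assms(5) by (simp add: dd_def)
qed

lemma sgate_Cd: "sgate \<in> Cd dd"
proof -
  have B: "sgate \<in> Box"
    by (rule Box_I) (auto simp: sgate_def less_imp_le[OF sig_pos] sig_le1)
  have S: "\<forall>x\<in>X. (\<Sum>k=1..p. sgate x k) = 1" using sig_sum by (simp add: sgate_def)
  have P: "\<forall>x\<in>X. 0 < pq sgate x"
  proof
    fix x assume x: "x \<in> X"
    then obtain k where "k \<in> {1..p}" "0 < pmf (P k) x" using inX by blast
    then show "0 < pq sgate x" using pis_pos(1)[of k x] x by (simp add: pq_sgate)
  qed
  have Z: "(\<Sum>x\<in>X. pq sgate x) = 1"
  proof -
    have "(\<Sum>x\<in>X. pq sgate x) = (\<Sum>x\<in>X. \<Sum>j=1..p. sigma eps p j * pmf (Pih j) x)"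
      by (intro sum.cong) (auto simp: pq_sgate pi_sigma_def)
    also have "\<dots> = 1" using sum_swapX[of "sigma eps p"] sig_sum by simp
    finally show ?thesis .
  qed
  have "\<forall>x\<in>X. 2 * dd x \<le> pq sgate x" using gate_Cd[OF B S P Z] fk_sgate_le by blast
  then have "\<forall>x\<in>X. dd x \<le> pq sgate x"
  proof (intro ballI)
    fix x assume "\<forall>x\<in>X. 2 * dd x \<le> pq sgate x" "x \<in> X"
    then have "2 * dd x \<le> pq sgate x" by blast
    then show "dd x \<le> pq sgate x" using dd_pos[of x] by linarith
  qed
  then show ?thesis using B S Z by (simp add: Cd_def)
qed

lemma exists_saddle: "\<exists>ls gs. is_saddle P Pih p ls gs"
proof -
  have dpos: "\<forall>y\<in>X. 0 < dd y" using dd_pos by blast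
  obtain ls gs where ls: "ls \<in> prob_simplex p" and gs: "gs \<in> Cd dd"
    and mm: "\<forall>k\<in>{1..p}. \<forall>c'\<in>Cd dd. fk k gs \<le> (\<Sum>j=1..p. ls j * fk j c')"
  proof -
    have "\<exists>l c. l \<in> prob_simplex p \<and> c \<in> Cd dd \<and> (\<forall>k\<in>{1..p}. \<forall>c'\<in>Cd dd. fk k c \<le> (\<Sum>j=1..p. l j * fk j c'))"
    proof (rule minimax_finite[where mix = mixf])
      show "compact (Cd dd)" by (rule compact_Cd)
      show "Cd dd \<noteq> {}" using sgate_Cd by blast
      show "1 \<le> p" by (rule p1)
      show "\<forall>k\<in>{1..p}. continuous_on (Cd dd) (fk k)" using fk_cont[OF dpos] by blast
      show "\<forall>a\<in>Cd dd. \<forall>b\<in>Cd dd. \<forall>t\<in>{0..1}. mixf t a b \<in> Cd dd \<and>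
          (\<forall>k\<in>{1..p}. fk k (mixf t a b) \<le> (1 - t) * fk k a + t * fk k b)"
        using mixf_Cd fk_conv[OF dpos] by auto
    qed
    then show ?thesis using that by blast
  qed
  have l0: "\<forall>k\<in>{1..p}. 0 \<le> ls k" and l1: "(\<Sum>k=1..p. ls k) = 1" using ls by (auto simp: prob_simplex_def)
  define v where "v = (\<Sum>j=1..p. ls j * fk j gs)"
  have fkv: "fk k gs \<le> v" if "k \<in> {1..p}" for k using mm that gs by (simp add: v_def)
  have gsM: "fk k gs \<le> MM" if k: "k \<in> {1..p}" for k
  proof -
    have "fk k gs \<le> (\<Sum>j=1..p. ls j * fk j sgate)" using mm k sgate_Cd by blast
    also have "\<dots> \<le> (\<Sum>j=1..p. ls j * MM)" using l0 fk_sgate_le by (intro sum_mono mult_left_mono) auto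
    also have "\<dots> = MM" using l1 by (simp add: sum_distrib_right[symmetric])
    finally show ?thesis .
  qed
  have gsB: "gs \<in> Box" and gsS: "\<forall>x\<in>X. (\<Sum>k=1..p. gs x k) = 1" and gsZ: "(\<Sum>x\<in>X. pq gs x) = 1"
    using gs by (auto simp: Cd_def)
  have gs2: "\<forall>x\<in>X. 2 * dd x \<le> pq gs x"
    using gate_Cd[OF gsB gsS _ gsZ] pq_pos[OF gs _ dpos] gsM by blast
  have gsG: "gs \<in> G1 P Pih p"
  proof -
    have "is_gate X p gs" unfolding is_gate_def using Box_D[OF gsB] gsS by blast
    moreover have "Z_g P Pih p gs = 1" unfolding Z_g_def using gsZ by (simp add: pg_X pq_def)
    ultimately show ?thesis by (simp add: G1_def)
  qed
  have KLgs: "KL (pmf (P k)) (pi_g P Pih p gs) = ereal (fk k gs)" if "k \<in> {1..p}" for k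
    using that pq_pos[OF gs _ dpos] by (intro KL_fk) (auto simp: pg_X pq_def)
  have Lgs: "Ltilde P Pih p l gs = ereal (\<Sum>k=1..p. l k * fk k gs)" if "\<forall>k\<in>{1..p}. 0 \<le> l k" for l
    unfolding Ltilde_def using that KLgs by (intro ereal_wsum) auto
  have Lv: "Ltilde P Pih p ls gs = ereal v" using Lgs[OF l0] by (simp add: v_def)
  have part_l: "Ltilde P Pih p l gs \<le> Ltilde P Pih p ls gs" if l: "l \<in> prob_simplex p" for l
  proof -
    have l0': "\<forall>k\<in>{1..p}. 0 \<le> l k" and l1': "(\<Sum>k=1..p. l k) = 1" using l by (auto simp: prob_simplex_def)
    have "(\<Sum>k=1..p. l k * fk k gs) \<le> (\<Sum>k=1..p. l k * v)" using l0' fkv by (intro sum_mono mult_left_mono) auto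
    also have "\<dots> = v" using l1' by (simp add: sum_distrib_right[symmetric])
    finally show ?thesis using Lgs[OF l0'] Lv by simp
  qed
  have part_g: "Ltilde P Pih p ls gs \<le> Ltilde P Pih p ls g" if g: "g \<in> G1 P Pih p" for g
  proof (cases "\<exists>k\<in>{1..p}. 0 < ls k \<and> (\<exists>x. pmf (P k) x \<noteq> 0 \<and> pg g x = 0)")
    case True
    then obtain k x where k: "k \<in> {1..p}" "0 < ls k" "pmf (P k) x \<noteq> 0" "pg g x = 0" by blast
    have "KL (pmf (P k)) (pi_g P Pih p g) = \<infinity>" using k(3,4) KL_infty[of "pmf (P k)" x] by simp
    then have "Ltilde P Pih p ls g = \<infinity>" unfolding Ltilde_def
      using l0 k KL_not_minf by (intro ereal_wsum_inf) auto
    then show ?thesis by simp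
  next
    case False
    have ggate: "is_gate X p g" and gZ: "Z_g P Pih p g = 1" using g by (auto simp: G1_def)
    have gpos: "0 < pg g x" if "k \<in> {1..p}" "0 < ls k" "pmf (P k) x \<noteq> 0" for k x
    proof -
      have "pg g x \<noteq> 0" using False that by blast
      then show ?thesis using pg_nonneg[OF ggate, of x] by linarith
    qed
    have Lg: "Ltilde P Pih p ls g = ereal (\<Sum>k=1..p. ls k * fk k g)"
      unfolding Ltilde_def using l0 gpos by (intro ereal_wsum ballI impI KL_fk) auto
    define h where "h x k = (if x \<in> X \<and> k \<in> {1..p} then (g x k + gs x k) / 2 else 0)" for x k
    have pqh: "pq h x = (pg g x + pq gs x) / 2" if x: "x \<in> X" for x
      unfolding pq_def h_def using x by (simp add: pg_X sum.distrib add_divide_distrib sum_divide_distrib[symmetric] algebra_simps)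
    have hC: "h \<in> Cd dd"
    proof -
      have "h \<in> Box"
      proof (rule Box_I)
        fix x k assume xk: "x \<in> X" "k \<in> {1..p}"
        have "0 \<le> g x k \<and> g x k \<le> 1" using ggate xk unfolding is_gate_def by blast
        then show "0 \<le> h x k \<and> h x k \<le> 1" using Box_D[OF gsB xk] xk unfolding h_def by auto
      qed (auto simp: h_def)
      moreover have "\<forall>x\<in>X. (\<Sum>k=1..p. h x k) = 1"
        using ggate gsS unfolding is_gate_def h_def by (simp add: sum.distrib sum_divide_distrib[symmetric])
      moreover have "(\<Sum>x\<in>X. pq h x) = 1"
      proof -
        have "(\<Sum>x\<in>X. pq h x) = (\<Sum>x\<in>X. (pg g x + pq gs x) / 2)" by (intro sum.cong) (auto simp: pqh)
        also have "\<dots> = (Z_g P Pih p g + 1) / 2"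
          by (simp add: Z_g_def sum.distrib sum_divide_distrib[symmetric] gsZ)
        finally show ?thesis using gZ by simp
      qed
      moreover have "\<forall>x\<in>X. dd x \<le> pq h x"
      proof
        fix x assume x: "x \<in> X"
        have "2 * dd x \<le> pq gs x" using gs2 x by blast
        moreover have "0 \<le> pg g x" using pg_nonneg[OF ggate] .
        ultimately show "dd x \<le> pq h x" using pqh[OF x] by simp
      qed
      ultimately show ?thesis by (simp add: Cd_def)
    qed
    have "v = (\<Sum>k=1..p. ls k * fk k gs)" by (simp add: v_def)
    also have "\<dots> \<le> (\<Sum>k=1..p. ls k * (\<Sum>j=1..p. ls j * fk j h))"
      using l0 mm hC by (intro sum_mono mult_left_mono) auto
    also have "\<dots> = (\<Sum>j=1..p. ls j * fk j h)" using l1 by (simp add: sum_distrib_right[symmetric])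
    also have "\<dots> \<le> (\<Sum>k=1..p. ls k * ((fk k gs + fk k g) / 2))"
    proof (rule sum_mono)
      fix k assume k: "k \<in> {1..p}"
      show "ls k * fk k h \<le> ls k * ((fk k gs + fk k g) / 2)"
      proof (cases "ls k = 0")
        case False
        then have lk: "0 < ls k" using l0 k by (simp add: order.not_eq_order_implies_strict)
        have "fk k h \<le> (fk k gs + fk k g) / 2"
        proof -
          have "fk k h = (\<Sum>x\<in>X. pmf (P k) x * (ln (pmf (P k) x) - ln (pq h x)))" by (rule fk_Cd[OF hC])
          also have "\<dots> \<le> (\<Sum>x\<in>X. (pmf (P k) x * (ln (pmf (P k) x) - ln (pq gs x)) + pmf (P k) x * (ln (pmf (P k) x) - ln (pg g x))) / 2)"
          proof (rule sum_mono)
            fix x assume x: "x \<in> X"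
            show "pmf (P k) x * (ln (pmf (P k) x) - ln (pq h x)) \<le> (pmf (P k) x * (ln (pmf (P k) x) - ln (pq gs x)) + pmf (P k) x * (ln (pmf (P k) x) - ln (pg g x))) / 2"
            proof (cases "pmf (P k) x = 0")
              case True then show ?thesis by simp
            next
              case False
              have A: "0 < pq gs x" using pq_pos[OF gs x dpos] .
              have B: "0 < pg g x" using gpos[OF k lk False] .
              have "(1 - 1/2) * ln (pq gs x) + (1/2) * ln (pg g x) \<le> ln ((1 - 1/2) * pq gs x + (1/2) * pg g x)"
                using ln_conc[OF A B, of "1/2"] by simp
              moreover have "(1 - 1/2) * pq gs x + (1/2) * pg g x = pq h x" using pqh[OF x] by simp
              ultimately have c: "(ln (pq gs x) + ln (pg g x)) / 2 \<le> ln (pq h x)" by simp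
              have "pmf (P k) x * ((ln (pq gs x) + ln (pg g x)) / 2) \<le> pmf (P k) x * ln (pq h x)"
                by (intro mult_left_mono[OF c]) simp
              then show ?thesis by (simp add: algebra_simps)
            qed
          qed
          also have "\<dots> = (fk k gs + fk k g) / 2"
            using fk_Cd[OF gs, of k] by (simp add: fk_def sum.distrib sum_divide_distrib[symmetric])
          finally show ?thesis .
        qed
        then show ?thesis using lk by (intro mult_left_mono) auto
      qed simp
    qed
    also have "\<dots> = (v + (\<Sum>k=1..p. ls k * fk k g)) / 2"
      by (simp add: v_def sum.distrib sum_divide_distrib[symmetric] distrib_left)
    finally have "v \<le> (\<Sum>k=1..p. ls k * fk k g)" by simp
    then show ?thesis using Lv Lg by simp
  qed
  have "is_saddle P Pih p ls gs"
    unfolding is_saddle_def using ls gsG part_l part_g by blast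
  then show ?thesis by blast
qed

end

theorem mainTheorem5:
  fixes p :: nat and P Pih :: "nat \<Rightarrow> 'a pmf" and eps :: "nat \<Rightarrow> real"
  assumes "1 \<le> p"
    and "\<forall>k\<in>{1..p}. finite (set_pmf (P k))"
    and "\<forall>k\<in>{1..p}. set_pmf (Pih k) \<subseteq> X0 P p"
    and "\<forall>k\<in>{1..p}. KL (pmf (P k)) (pmf (Pih k)) \<le> ereal (eps k)"
  shows "(\<exists>ls gs. is_saddle P Pih p ls gs) \<and>
         (\<forall>ls gs. is_saddle P Pih p ls gs \<longrightarrow>
            (\<forall>l\<in>prob_simplex p. KL (mixture P p l) (pi_g P Pih p gs)
               \<le> ereal (ln (\<Sum>k=1..p. exp (eps k)) - H_cond P Pih eps p ls) - JSD P p l))"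
proof -
  interpret msetting p P Pih eps using assms by unfold_locales
  show ?thesis using exists_saddle part2 by blast
qed

end
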